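(* Let $i\ge0$, let $\mathbf{e}_i$ be a 1-dimensional error pattern at level $i$, let $P_i$ be its number of paths, and let $\mathbf{e}_{i+1}$ be a 1-dimensional preimage of $\mathbf{e}_i$. Then $\mathrm{wt}(\mathbf{e}_{i+1})\ge\mathrm{wt}(\mathbf{e}_i)+P_i$.
   Context: 1-dimensional model. For $j\ge0$, the line at level $j$ is the cycle with vertex set $\mathbb{Z}/2^j\mathbb{Z}$ and edges $\{v,v+1\}$, $v\in\mathbb{Z}/2^j\mathbb{Z}$ (for $j=0$, one vertex with a loop edge). A 1-dimensional error pattern at level $j$ is a subset of these edges; $\mathrm{wt}$ is its number of edges; its syndrome is the set of vertices incident to an odd number of its edges. The number of paths of a pattern is the number of connected components (maximal runs of consecutive edges) of the pattern, except that it is $0$ when the pattern is the whole cycle. At level $j+1$, block $m\in\mathbb{Z}/2^j\mathbb{Z}$ consists of the left edge $\{2m,2m+1\}$ and right edge $\{2m+1,2m+2\}$ and corresponds to the edge $\{m,m+1\}$ at level $j$. One reduction stage applied to a pattern $\mathbf{f}$ at level $j+1$ with syndrome $S$: (a) for every block, if $2m+1,2m+2\in S$, flip (add mod 2) the right edge and remove both from $S$; (b) then for every block, if $2m+1$ is still in $S$, flip the left edge. In the resulting pattern $\mathbf{f}'$ each block contains $0$ or $2$ edges; the image of $\mathbf{f}$ is the pattern at level $j$ containing $\{m,m+1\}$ iff block $m\subseteq\mathbf{f}'$. A pattern $\mathbf{f}$ at level $j+1$ is a 1-dimensional preimage of $\mathbf{g}$ at level $j$ if the image of $\mathbf{f}$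 is $\mathbf{g}$. *)

theory Defs
  imports Main
begin

text \<open>Level j: cycle on vertices Z/2^j (represented by 0..<2^j). The edge {v, v+1}
  is represented by its index v in 0..<2^j. An error pattern is a set of edge indices.\<close>

definition edges :: "nat \<Rightarrow> nat set" where
  "edges j = {0..<2^j}"

definition vertices :: "nat \<Rightarrow> nat set" where
  "vertices j = {0..<2^j}"

definition incident :: "nat \<Rightarrow> nat \<Rightarrow> nat \<Rightarrow> bool" where
  "incident j u v \<longleftrightarrow> u = v \<or> u = (v + 1) mod 2^j"

definition wt :: "nat set \<Rightarrow> nat" where
  "wt f = card f"

definition syndrome :: "nat \<Rightarrow> nat set \<Rightarrow> nat set" where
  "syndrome j f = {u \<in> vertices j. odd (card {v \<in> f. incident j u v})}"

text \<open>The whole cycle is not a run, so the number of paths of the whole cycle is 0.\<close>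
definition maximal_runs :: "nat \<Rightarrow> nat set \<Rightarrow> nat set set" where
  "maximal_runs j g = {R. \<exists>s l. s < 2^j \<and> 1 \<le> l \<and> l < 2^j
      \<and> R = {(s + k) mod 2^j | k. k < l} \<and> R \<subseteq> g
      \<and> (s + 2^j - 1) mod 2^j \<notin> g \<and> (s + l) mod 2^j \<notin> g}"

definition num_paths :: "nat \<Rightarrow> nat set \<Rightarrow> nat" where
  "num_paths j g = card (maximal_runs j g)"

text \<open>One reduction stage from level j+1 to level j. Block m (m < 2^j) has left edge 2m
  (= {2m,2m+1}) and right edge 2m+1 (= {2m+1,2m+2}).\<close>
definition stageA_blocks :: "nat \<Rightarrow> nat set \<Rightarrow> nat set" where
  "stageA_blocks j f = {m \<in> {0..<2^j}. 2*m+1 \<in> syndrome (Suc j) f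
       \<and> (2*m+2) mod 2^(Suc j) \<in> syndrome (Suc j) f}"

definition syndrome_after_A :: "nat \<Rightarrow> nat set \<Rightarrow> nat set" where
  "syndrome_after_A j f = syndrome (Suc j) f
     - (\<Union>m\<in>stageA_blocks j f. {2*m+1, (2*m+2) mod 2^(Suc j)})"

definition pattern_after_A :: "nat \<Rightarrow> nat set \<Rightarrow> nat set" where
  "pattern_after_A j f = (f - {2*m+1 | m. m \<in> stageA_blocks j f})
     \<union> ({2*m+1 | m. m \<in> stageA_blocks j f} - f)"

definition reduced_pattern :: "nat \<Rightarrow> nat set \<Rightarrow> nat set" where
  "reduced_pattern j f = (let f1 = pattern_after_A j f;
       L = {2*m | m. m < 2^j \<and> 2*m+1 \<in> syndrome_after_A j f}
     in (f1 - L) \<union> (L - f1))"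

definition image_pattern :: "nat \<Rightarrow> nat set \<Rightarrow> nat set" where
  "image_pattern j f = {m \<in> {0..<2^j}. 2*m \<in> reduced_pattern j f \<and> 2*m+1 \<in> reduced_pattern j f}"

definition is_preimage :: "nat \<Rightarrow> nat set \<Rightarrow> nat set \<Rightarrow> bool" where
  "is_preimage j f g \<longleftrightarrow> f \<subseteq> edges (Suc j) \<and> image_pattern j f = g"

end

theory Submission
  imports Defs
begin

lemma mod_succ: assumes "v < (N::nat)" shows " (v+1) mod N = (if v+1 < N then v+1 else 0)"
proof (cases "v+1 < N")
  case False then have "v+1 = N" using assms by simp
  then show ?thesis by simp
qed simp

lemma mod_pred: assumes "u < (N::nat)" shows " (u+N-1) mod N = (if u = 0 then N-1 else u-1)"
proof (cases "u = 0")
  case True then show ?thesis using assms by simp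
next
  case False
  then have "u + N - 1 = (u - 1) + N" by simp
  then have "(u+N-1) mod N = (u-1) mod N" by simp
  then show ?thesis using False assms by simp
qed

lemma syn:
  assumes f: "f \<subseteq> {0..<2^Suc j}" and u: "u < 2^Suc j"
  shows "u \<in> syndrome (Suc j) f \<longleftrightarrow> ((u\<in>f) \<noteq> ((u + 2^Suc j - 1) mod 2^Suc j \<in> f))"
proof -
  define N :: nat where "N = 2^Suc j"
  have N2: "N \<ge> 2" unfolding N_def by simp
  define p where "p = (u + N - 1) mod N"
  have p: "p = (if u = 0 then N-1 else u-1)" unfolding p_def using mod_pred[of u N] u N_def by simp
  have upn: "u \<noteq> p" using p N2 by auto
  have eq: "{v \<in> f. incident (Suc j) u v} = f \<inter> {u, p}"
  proof -
    have "incident (Suc j) u v \<longleftrightarrow> v = u \<or> v = p" if "v < N" for v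
    proof -
      have "incident (Suc j) u v \<longleftrightarrow> u = v \<or> u = (v+1) mod N"
        unfolding incident_def N_def by (rule refl)
      also have "\<dots> \<longleftrightarrow> v = u \<or> v = p"
        unfolding mod_succ[OF that] p using u that N2 unfolding N_def[symmetric] by (cases "v+1<N"; cases "u=0") auto
      finally show ?thesis .
    qed
    moreover have "v < N" if "v \<in> f" for v using f that unfolding N_def by auto
    ultimately show ?thesis by blast
  qed
  have "card (f \<inter> {u,p}) = of_bool (u\<in>f) + of_bool (p \<in> f)"
    using upn by (cases "u\<in>f"; cases "p\<in>f") (auto simp: Int_insert_right)
  then have "odd (card {v \<in> f. incident (Suc j) u v}) \<longleftrightarrow> ((u\<in>f) \<noteq> (p \<in> f))"
    unfolding eq by (cases "u\<in>f"; cases "p\<in>f") simp_all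
  moreover have "u \<in> vertices (Suc j)" using u unfolding vertices_def by simp
  ultimately show ?thesis unfolding syndrome_def p_def N_def by blast
qed

lemma pA_mem: "x \<in> pattern_after_A j f \<longleftrightarrow> ((x\<in>f) \<noteq> (x \<in> {2*m+1|m. m\<in>stageA_blocks j f}))"
  by (auto simp: pattern_after_A_def)

lemma red_mem: "x \<in> reduced_pattern j f \<longleftrightarrow> ((x \<in> pattern_after_A j f) \<noteq> (x \<in> {2*m | m. m<2^j \<and> 2*m+1 \<in> syndrome_after_A j f}))"
  by (auto simp: reduced_pattern_def Let_def)

lemma img_mem:
  assumes f: "f \<subseteq> {0..<2^Suc j}" and m: "m < 2^j"
  shows "m \<in> image_pattern j f \<longleftrightarrow>
    2 \<le> of_bool (2*m \<in> f) + of_bool (2*m+1 \<in> f) + (of_bool (2*((m+1) mod 2^j) \<in> f) :: nat)"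
proof -
  define N :: nat where "N = 2^Suc j"
  define M :: nat where "M = 2^j"
  have NM: "N = 2*M" unfolding N_def M_def by simp
  have mM: "m < M" using m M_def by simp
  have c_eq: "(2*m+2) mod N = 2*((m+1) mod M)" unfolding NM
    by (metis mult_Suc_right add_2_eq_Suc' mod_mult_mult1 Suc_eq_plus1 mult_2 add.commute)
  have even_c: "\<And>m'. (2*m'+2) mod N = 2*((m'+1) mod M)" unfolding NM
    by (metis mult_Suc_right add_2_eq_Suc' mod_mult_mult1 Suc_eq_plus1 mult_2 add.commute)
  have s1: "2*m+1 \<in> syndrome (Suc j) f \<longleftrightarrow> ((2*m+1 \<in> f) \<noteq> (2*m \<in> f))"
  proof -
    have "(2*m+1 + N - 1) mod N = 2*m" using mM NM by simp
    then show ?thesis using syn[OF f, of "2*m+1"] mM NM N_def by simp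
  qed
  have s2: "(2*m+2) mod N \<in> syndrome (Suc j) f \<longleftrightarrow> ((2*((m+1) mod M) \<in> f) \<noteq> (2*m+1 \<in> f))"
  proof -
    have lt: "(2*m+2) mod N < N" using NM mM by simp
    have "((2*m+2) mod N + N - 1) mod N = 2*m+1"
    proof (cases "2*m+2 < N")
      case True then have "(2*m+2) mod N + N - 1 = (2*m+1) + N" by simp
      moreover have "((2*m+1) + N) mod N = 2*m+1" using True by (simp only: mod_add_self2) simp
      ultimately show ?thesis by metis
    next
      case False then have "2*m+2 = N" using mM NM by simp
      then show ?thesis by simp
    qed
    then show ?thesis using syn[OF f lt[unfolded N_def]] c_eq N_def by simp
  qed
  have A: "m \<in> stageA_blocks j f \<longleftrightarrow> ((2*m+1 \<in> f) \<noteq> (2*m \<in> f)) \<and> ((2*((m+1) mod M) \<in> f) \<noteq> (2*m+1 \<in> f))"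
    using s1 s2 m unfolding stageA_blocks_def N_def by auto
  have sA: "2*m+1 \<in> syndrome_after_A j f \<longleftrightarrow> 2*m+1 \<in> syndrome (Suc j) f \<and> m \<notin> stageA_blocks j f"
  proof -
    have "2*m+1 \<noteq> (2*m'+2) mod 2^Suc j" for m'
      using even_c[of m'] unfolding N_def by (metis odd_two_times_div_two_succ even_mult_iff dvd_triv_left even_plus_one_iff)
    then show ?thesis unfolding syndrome_after_A_def by auto
  qed
  have r0: "2*m \<in> reduced_pattern j f \<longleftrightarrow> ((2*m \<in> f) \<noteq> (2*m+1 \<in> syndrome_after_A j f))"
    unfolding red_mem pA_mem using m by auto presburger+
  have r1: "2*m+1 \<in> reduced_pattern j f \<longleftrightarrow> ((2*m+1 \<in> f) \<noteq> (m \<in> stageA_blocks j f))"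
    unfolding red_mem pA_mem by auto presburger+
  show ?thesis unfolding image_pattern_def M_def[symmetric] using r0 r1 sA A s1 mM
    by (cases "2*m \<in> f"; cases "2*m+1 \<in> f"; cases "2*((m+1) mod M) \<in> f") auto
qed


lemma sum_pairs: "(\<Sum>k<2*n. h k) = (\<Sum>m<n. h (2*m) + h (2*m+1))" for h :: "nat \<Rightarrow> nat"
proof (induction n)
  case (Suc n)
  have "{..<2*Suc n} = insert (2*n+1) (insert (2*n) {..<2*n})" by auto
  then show ?case using Suc by simp
qed simp

lemma succ_inj: assumes "m < M" "m' < M" "(m+1) mod (M::nat) = (m'+1) mod M" shows "m = m'"
  using assms mod_succ[of m M] mod_succ[of m' M] by (auto split: if_splits)

lemma pred_succ: assumes "m < (M::nat)" shows "((m+M-1) mod M + 1) mod M = m"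
  using assms mod_pred[OF assms] by (cases "m = 0") auto

lemma pred_inj: assumes "m < M" "m' < M" "(m+M-1) mod (M::nat) = (m'+M-1) mod M" shows "m = m'"
  using pred_succ[OF assms(1)] pred_succ[OF assms(2)] assms(3) by metis

lemma weight_count:
  fixes f g :: "nat set" and M :: nat
  assumes M: "M > 0" and f: "f \<subseteq> {0..<2*M}" and g: "g \<subseteq> {..<M}"
    and maj: "\<And>m. m < M \<Longrightarrow> m \<in> g \<longleftrightarrow>
      2 \<le> of_bool (2*m \<in> f) + of_bool (2*m+1 \<in> f) + (of_bool (2*((m+1) mod M) \<in> f) :: nat)"
  shows "card f \<ge> card g + card {m\<in>g. (m+M-1) mod M \<notin> g}"
proof -
  define S where "S = {m\<in>g. (m+M-1) mod M \<notin> g}"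
  define \<psi> :: "nat \<Rightarrow> nat" where "\<psi> m = of_bool (2*m+1 \<in> f) + of_bool (2*((m+1) mod M) \<in> f)" for m
  define p where "p m = (m+M-1) mod M" for m
  have finM: "finite {..<M}" by simp
  have fing: "finite g" using g finite_subset by blast
  have SG: "S \<subseteq> g" unfolding S_def by auto
  have finS: "finite S" using SG fing finite_subset by blast
  have c1: "card f = (\<Sum>k<2*M. of_bool (k \<in> f))"
  proof -
    have "{..<2*M} \<inter> {x. x \<in> f} = f" using f by auto
    then show ?thesis by simp
  qed
  also have "\<dots> = (\<Sum>m<M. of_bool (2*m \<in> f) + of_bool (2*m+1 \<in> f))" by (rule sum_pairs)
  also have "\<dots> = (\<Sum>m<M. of_bool (2*m \<in> f)) + (\<Sum>m<M. of_bool (2*m+1 \<in> f))" by (simp add: sum.distrib)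
  also have "(\<Sum>m<M. of_bool (2*m \<in> f)) = (\<Sum>m<M. (of_bool (2*((m+1) mod M) \<in> f) :: nat))"
  proof -
    have inj: "inj_on (\<lambda>m. (m+1) mod M) {..<M}" by (rule inj_onI) (use succ_inj in auto)
    have sub: "(\<lambda>m. (m+1) mod M) ` {..<M} \<subseteq> {..<M}" using M by auto
    have "bij_betw (\<lambda>m. (m+1) mod M) {..<M} {..<M}"
      unfolding bij_betw_def using inj endo_inj_surj[OF finM sub inj] by simp
    from sum.reindex_bij_betw[OF this, of "\<lambda>k. (of_bool (2*k \<in> f) :: nat)"] show ?thesis by simp
  qed
  finally have cf: "card f = (\<Sum>m<M. \<psi> m)" unfolding \<psi>_def by (simp add: sum.distrib)
  have split1: "(\<Sum>m<M. \<psi> m) = (\<Sum>m\<in>g. \<psi> m) + (\<Sum>m\<in>{..<M}-g. \<psi> m)"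
    using sum.subset_diff[OF g finM, of \<psi>] by simp
  have pS: "p ` S \<subseteq> {..<M} - g"
  proof
    fix x assume "x \<in> p ` S"
    then obtain m where m: "m \<in> S" "x = p m" by blast
    have "x < M" unfolding m(2) p_def using M by (rule mod_less_divisor)
    moreover have "x \<notin> g" using m unfolding S_def p_def by blast
    ultimately show "x \<in> {..<M} - g" by blast
  qed
  have injp: "inj_on p S"
  proof (rule inj_onI)
    fix x y assume "x \<in> S" "y \<in> S" "p x = p y"
    then show "x = y" using pred_inj[of x M y] SG g unfolding p_def by blast
  qed
  have "(\<Sum>m\<in>{..<M}-g. \<psi> m) \<ge> (\<Sum>m\<in>p ` S. \<psi> m)"
    by (rule sum_mono2) (use pS in auto)
  also have "(\<Sum>m\<in>p ` S. \<psi> m) = (\<Sum>m\<in>S. \<psi> (p m))" using sum.reindex[OF injp] by simp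
  finally have b1: "(\<Sum>m\<in>{..<M}-g. \<psi> m) \<ge> (\<Sum>m\<in>S. \<psi> (p m))" .
  have split2: "(\<Sum>m\<in>g. \<psi> m) = (\<Sum>m\<in>g-S. \<psi> m) + (\<Sum>m\<in>S. \<psi> m)"
    using sum.subset_diff[OF SG fing, of \<psi>] by simp
  have b2: "(\<Sum>m\<in>g-S. \<psi> m) \<ge> card (g-S)"
  proof -
    have "(\<Sum>m\<in>g-S. (1::nat)) \<le> (\<Sum>m\<in>g-S. \<psi> m)"
    proof (rule sum_mono)
      fix m assume "m \<in> g - S"
      then have "m < M" "m \<in> g" using g by auto
      then show "1 \<le> \<psi> m" using maj[of m] unfolding \<psi>_def
        by (cases "2*m \<in> f"; cases "2*((m+1) mod M) \<in> f"; cases "2*m+1 \<in> f") auto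
    qed
    then show ?thesis by simp
  qed
  have b3: "(\<Sum>m\<in>S. \<psi> m + \<psi> (p m)) \<ge> 2 * card S"
  proof -
    have "(\<Sum>m\<in>S. (2::nat)) \<le> (\<Sum>m\<in>S. \<psi> m + \<psi> (p m))"
    proof (rule sum_mono)
      fix m assume "m \<in> S"
      then have m: "m < M" "m \<in> g" using SG g by auto
      have "(p m + 1) mod M = m" unfolding p_def using pred_succ[OF m(1)] .
      then have "\<psi> (p m) \<ge> of_bool (2*m \<in> f)" unfolding \<psi>_def by simp
      then show "2 \<le> \<psi> m + \<psi> (p m)" using maj[OF m(1)] m(2) unfolding \<psi>_def
        by (cases "2*m \<in> f"; cases "2*((m+1) mod M) \<in> f"; cases "2*m+1 \<in> f") auto
    qed
    then show ?thesis by simp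
  qed
  have cg: "card g = card (g - S) + card S" using card_Diff_subset[OF finS SG] card_mono[OF fing SG] by simp
  have "(\<Sum>m\<in>S. \<psi> m + \<psi> (p m)) = (\<Sum>m\<in>S. \<psi> m) + (\<Sum>m\<in>S. \<psi> (p m))" by (simp add: sum.distrib)
  then show ?thesis using cf split1 split2 b1 b2 b3 cg unfolding S_def[symmetric] by linarith
qed


lemma run_start:
  fixes M s l x :: nat
  assumes M: "M > 0" and s: "s < M" and R: "R = {(s + k) mod M | k. k < l}" and Rg: "R \<subseteq> g"
    and x: "x \<in> R" and xp: "(x + M - 1) mod M \<notin> g"
  shows "x = s"
proof -
  obtain k where k: "k < l" "x = (s+k) mod M" using x R by auto
  show ?thesis
  proof (cases k)
    case 0 then show ?thesis using k s by simp
  next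
    case (Suc k')
    have "(x + M - 1) mod M = ((s+k) mod M + (M - 1)) mod M" using k M by simp
    also have "\<dots> = (s + k + (M-1)) mod M" by (simp add: mod_add_left_eq)
    also have "s + k + (M-1) = (s + k') + M" using Suc M by simp
    finally have "(x + M - 1) mod M = (s+k') mod M" by simp
    moreover have "(s+k') mod M \<in> R" using R Suc k by auto
    ultimately show ?thesis using Rg xp by auto
  qed
qed

lemma paths_le:
  assumes g: "g \<subseteq> {..<2^i}"
  shows "num_paths i g \<le> card {m\<in>g. (m+2^i-1) mod 2^i \<notin> g}"
proof -
  define M :: nat where "M = 2^i"
  have M: "M > 0" unfolding M_def by simp
  define S where "S = {m\<in>g. (m+M-1) mod M \<notin> g}"
  define G where "G R = (SOME x. x \<in> R \<and> (x+M-1) mod M \<notin> g)" for R :: "nat set"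
  have key: "G R = s \<and> s \<in> S" if "s < M" "1 \<le> l" "l < M" "R = {(s + k) mod M | k. k < l}" "R \<subseteq> g"
    "(s + M - 1) mod M \<notin> g" for R s l
  proof -
    have sR: "s \<in> R" using that by (auto intro!: exI[of _ 0])
    have "G R \<in> R \<and> (G R + M - 1) mod M \<notin> g"
      unfolding G_def by (rule someI[of _ s]) (use sR that in auto)
    then have "G R = s" using run_start[OF M that(1) that(4) that(5)] by blast
    then show ?thesis using sR that unfolding S_def by auto
  qed
  have inj: "inj_on G (maximal_runs i g)"
  proof (rule inj_onI)
    fix R1 R2 assume R1: "R1 \<in> maximal_runs i g" and R2: "R2 \<in> maximal_runs i g" and eq: "G R1 = G R2"
    obtain s1 l1 where h1: "s1 < M" "1 \<le> l1" "l1 < M" "R1 = {(s1 + k) mod M | k. k < l1}" "R1 \<subseteq> g"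
      "(s1 + M - 1) mod M \<notin> g" "(s1 + l1) mod M \<notin> g"
      using R1 unfolding maximal_runs_def M_def by blast
    obtain s2 l2 where h2: "s2 < M" "1 \<le> l2" "l2 < M" "R2 = {(s2 + k) mod M | k. k < l2}" "R2 \<subseteq> g"
      "(s2 + M - 1) mod M \<notin> g" "(s2 + l2) mod M \<notin> g"
      using R2 unfolding maximal_runs_def M_def by blast
    have "s1 = s2" using key[OF h1(1-6)] key[OF h2(1-6)] eq by simp
    moreover have "\<not> l1 < l2"
    proof
      assume "l1 < l2"
      then have "(s2 + l1) mod M \<in> R2" using h2(4) by auto
      then show False using h2(5) h1(7) \<open>s1 = s2\<close> by auto
    qed
    moreover have "\<not> l2 < l1"
    proof
      assume "l2 < l1"
      then have "(s1 + l2) mod M \<in> R1" using h1(4) by auto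
      then show False using h1(5) h2(7) \<open>s1 = s2\<close> by auto
    qed
    ultimately show "R1 = R2" using h1(4) h2(4) by simp
  qed
  have sub: "G ` maximal_runs i g \<subseteq> S"
  proof
    fix x assume "x \<in> G ` maximal_runs i g"
    then obtain R where R: "R \<in> maximal_runs i g" "x = G R" by auto
    obtain s l where h: "s < M" "1 \<le> l" "l < M" "R = {(s + k) mod M | k. k < l}" "R \<subseteq> g"
      "(s + M - 1) mod M \<notin> g"
      using R(1) unfolding maximal_runs_def M_def by blast
    show "x \<in> S" using key[OF h] R(2) by simp
  qed
  have finS: "finite S" by (rule finite_subset[of _ "{..<M}"]) (use g in \<open>auto simp: S_def M_def\<close>)
  have "num_paths i g \<le> card S" unfolding num_paths_def by (rule card_inj_on_le[OF inj sub finS])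
  then show ?thesis unfolding S_def M_def .
qed

theorem lemma1:
  fixes i :: nat and e_i e_i1 :: "nat set"
  assumes "e_i \<subseteq> edges i"
    and "is_preimage i e_i1 e_i"
  shows "wt e_i1 \<ge> wt e_i + num_paths i e_i"
proof -
  have f: "e_i1 \<subseteq> {0..<2^Suc i}" and img: "image_pattern i e_i1 = e_i"
    using assms(2) unfolding is_preimage_def edges_def by auto
  have g: "e_i \<subseteq> {..<2^i}" using assms(1) unfolding edges_def by auto
  have f': "e_i1 \<subseteq> {0..<2*2^i}" using f by simp
  have "card e_i1 \<ge> card e_i + card {m\<in>e_i. (m+2^i-1) mod 2^i \<notin> e_i}"
    by (rule weight_count[OF _ f' g]) (use img_mem[OF f] img in auto)
  then show ?thesis using paths_le[OF g] unfolding wt_def by linarith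
qed

end
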